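(* The one-dimensional subalgebras of ${\rm A}_1$ are exactly $\langle e_1\rangle$, $\langle e_2\rangle$ and $\langle \alpha e_2+e_3\rangle$ ($\alpha\in\mathbb{C}$). Up to automorphisms of ${\rm A}_1$, every one-dimensional subalgebra of ${\rm A}_1$ is equivalent to $\langle e_1\rangle$ or $\langle e_2\rangle$.
   Context: ${\rm A}_1$ is the complex algebra with basis $e_1,e_2,e_3$ whose only nonzero products of basis elements are $e_1e_i=e_ie_1=e_i$ ($i=1,2,3$) (it carries the involution $\overline{e_1}=e_1,\overline{e_2}=e_2,\overline{e_3}=-e_3$, which plays no role here). A subalgebra is a linear subspace closed under multiplication (it need not contain $e_1$). Two subalgebras are equivalent up to automorphisms if one is mapped onto the other by an algebra automorphism (invertible linear map $\varphi$ with $\varphi(xy)=\varphi(x)\varphi(y)$). $\langle S\rangle$ denotes the linear span of $S$. *)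

theory Defs
  imports "HOL-Analysis.Analysis"
begin

text \<open>The algebra A1 realised on complex^3; coordinates w.r.t. the basis e1,e2,e3.
  Complex-linear structure via the library interpretation vec (scalar mult *s).\<close>

definition e1 :: "complex ^ 3" where "e1 = axis 1 1"
definition e2 :: "complex ^ 3" where "e2 = axis 2 1"
definition e3 :: "complex ^ 3" where "e3 = axis 3 1"

text \<open>Bilinear product with e1 e_i = e_i e1 = e_i and all other basis products zero.\<close>
definition A1_mult :: "complex ^ 3 \<Rightarrow> complex ^ 3 \<Rightarrow> complex ^ 3" where
  "A1_mult x y = vector [x$1 * y$1, x$1 * y$2 + x$2 * y$1, x$1 * y$3 + x$3 * y$1]"

definition A1_subalgebra :: "(complex ^ 3) set \<Rightarrow> bool" where
  "A1_subalgebra S \<longleftrightarrow> vec.subspace S \<and> (\<forall>x\<in>S. \<forall>y\<in>S. A1_mult x y \<in> S)"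

definition A1_automorphism :: "(complex ^ 3 \<Rightarrow> complex ^ 3) \<Rightarrow> bool" where
  "A1_automorphism \<phi> \<longleftrightarrow> Vector_Spaces.linear (*s) (*s) \<phi> \<and> bij \<phi> \<and>
     (\<forall>x y. \<phi> (A1_mult x y) = A1_mult (\<phi> x) (\<phi> y))"

definition A1_equiv :: "(complex ^ 3) set \<Rightarrow> (complex ^ 3) set \<Rightarrow> bool" where
  "A1_equiv S T \<longleftrightarrow> (\<exists>\<phi>. A1_automorphism \<phi> \<and> \<phi> ` S = T)"

end

theory Submission
  imports Defs
begin

lemma mult_c: "A1_mult x y $ 1 = x$1 * y$1" "A1_mult x y $ 2 = x$1 * y$2 + x$2 * y$1"
  "A1_mult x y $ 3 = x$1 * y$3 + x$3 * y$1"
  by (simp_all add: A1_mult_def)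

lemma e_c: "e1$1 = 1" "e1$2 = 0" "e1$3 = 0" "e2$1 = 0" "e2$2 = 1" "e2$3 = 0"
  "e3$1 = 0" "e3$2 = 0" "e3$3 = 1"
  by (simp_all add: e1_def e2_def e3_def axis_def)

lemma span1: "vec.span {v} = range (\<lambda>k. k *s v)"
  by (rule vec.span_singleton)

lemma dim1: "v \<noteq> 0 \<Longrightarrow> vec.dim (vec.span {v}) = 1"
proof -
  assume "v \<noteq> 0"
  then have "vec.independent {v}"
    by (intro vec.independent_insertI) (auto simp: vec.independent_empty)
  then show ?thesis by (simp add: vec.dim_span_eq_card_independent)
qed

lemma sub_span: "A1_mult v v = 0 \<or> A1_mult v v = v \<Longrightarrow> A1_subalgebra (vec.span {v})"
  unfolding A1_subalgebra_def span1
proof (intro conjI ballI)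
  show "vec.subspace (range (\<lambda>k. k *s v))" by (metis span1 vec.subspace_span)
  fix x y assume "x \<in> range (\<lambda>k. k *s v)" "y \<in> range (\<lambda>k. k *s v)"
  then obtain a b where xy: "x = a *s v" "y = b *s v" by auto
  assume h: "A1_mult v v = 0 \<or> A1_mult v v = v"
  show "A1_mult x y \<in> range (\<lambda>k. k *s v)"
  proof (cases "A1_mult v v = 0")
    case True
    have "A1_mult x y = 0 *s v"
      using True unfolding xy by (auto simp: vec_eq_iff forall_3 mult_c algebra_simps)
    then show ?thesis by blast
  next
    case False
    then have h2: "A1_mult v v = v" using h by auto
    have "A1_mult x y = (a*b) *s v"
      using h2 unfolding xy vec_eq_iff forall_3 mult_c by (auto simp: algebra_simps)
    then show ?thesis by blast
  qed
qed

lemma span_scale: "c \<noteq> 0 \<Longrightarrow> vec.span {c *s w} = vec.span {w}"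
  unfolding span1
proof (intro set_eqI iffI)
  fix x assume "c \<noteq> 0" "x \<in> range (\<lambda>k. k *s (c *s w))"
  then obtain k where "x = k *s (c *s w)" by auto
  then have "x = (k*c) *s w" by simp
  then show "x \<in> range (\<lambda>k. k *s w)" by blast
next
  fix x assume c: "c \<noteq> 0" "x \<in> range (\<lambda>k. k *s w)"
  then obtain k where "x = k *s w" by auto
  then have "x = (k/c) *s (c *s w)" using c by simp
  then show "x \<in> range (\<lambda>k. k *s (c *s w))" by blast
qed

lemma classify:
  assumes v: "v \<noteq> 0" and k: "A1_mult v v = k *s v"
  shows "vec.span {v} = vec.span {e1} \<or> vec.span {v} = vec.span {e2} \<or>
             (\<exists>\<alpha>::complex. vec.span {v} = vec.span {\<alpha> *s e2 + e3})"
proof -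
  have c1: "v$1 * v$1 = k * v$1" and c2: "2 * v$1 * v$2 = k * v$2" and c3: "2 * v$1 * v$3 = k * v$3"
    using k unfolding vec_eq_iff forall_3 mult_c by (auto simp: algebra_simps)
  show ?thesis
  proof (cases "v$1 = 0")
    case False
    then have "k = v$1" using c1 by simp
    then have "v$2 = 0" "v$3 = 0" using c2 c3 False by auto
    then have "v = v$1 *s e1" using \<open>v$1 \<noteq> 0\<close> by (simp add: vec_eq_iff forall_3 e_c)
    then show ?thesis using span_scale[OF False, of e1] by metis
  next
    case z: True
    show ?thesis
    proof (cases "v$3 = 0")
      case True
      then have "v$2 \<noteq> 0" using z v by (auto simp: vec_eq_iff forall_3)
      moreover have "v = v$2 *s e2" using z True by (simp add: vec_eq_iff forall_3 e_c)
      ultimately show ?thesis using span_scale[of "v$2" e2] by metis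
    next
      case False
      have "v = v$3 *s ((v$2/v$3) *s e2 + e3)" using z False by (simp add: vec_eq_iff forall_3 e_c)
      then show ?thesis using span_scale[OF False, of "(v$2/v$3) *s e2 + e3"] by metis
    qed
  qed
qed

definition phi :: "complex \<Rightarrow> complex^3 \<Rightarrow> complex^3" where
  "phi a x = vector [x$1, x$3, x$2 - a * x$3]"

lemma phi_c: "phi a x $ 1 = x$1" "phi a x $ 2 = x$3" "phi a x $ 3 = x$2 - a * x$3"
  by (simp_all add: phi_def)

lemma phi_aut: "A1_automorphism (phi a)"
  unfolding A1_automorphism_def
proof (intro conjI allI)
  show "Vector_Spaces.linear (*s) (*s) (phi a)"
    unfolding Vector_Spaces.linear_iff
    by (auto simp: vec.vector_space_axioms vec_eq_iff forall_3 phi_c algebra_simps)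
  define g :: "complex^3 \<Rightarrow> complex^3" where "g x = vector [x$1, x$3 + a * x$2, x$2]" for x
  have "g \<circ> phi a = id" "phi a \<circ> g = id"
    by (auto simp: g_def fun_eq_iff vec_eq_iff forall_3 phi_c)
  then show "bij (phi a)" using o_bij by blast
  fix x y
  show "phi a (A1_mult x y) = A1_mult (phi a x) (phi a y)"
    by (auto simp: vec_eq_iff forall_3 phi_c mult_c algebra_simps)
qed

lemma phi_img: "phi a ` vec.span {a *s e2 + e3} = vec.span {e2}"
  unfolding span1 image_image
  by (rule arg_cong[where f = range]) (auto simp: fun_eq_iff vec_eq_iff forall_3 phi_c e_c)


lemma fwd:
  assumes "A1_subalgebra S" "vec.dim S = 1"
  shows "S = vec.span {e1} \<or> S = vec.span {e2} \<or>
             (\<exists>\<alpha>::complex. S = vec.span {\<alpha> *s e2 + e3})"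
proof -
  obtain B where B: "B \<subseteq> S" "vec.independent B" "S \<subseteq> vec.span B" "card B = vec.dim S"
    by (rule vec.basis_exists)
  then obtain v where Bv: "B = {v}" using assms(2) card_1_singletonE by metis
  have sub: "vec.subspace S" using assms(1) A1_subalgebra_def by blast
  have Sv: "S = vec.span {v}" using B Bv vec.span_minimal[OF _ sub] by blast
  have v0: "v \<noteq> 0" using B(2) Bv vec.dependent_zero by blast
  have "A1_mult v v \<in> S" using assms(1) Bv B(1) unfolding A1_subalgebra_def by blast
  then obtain k where "A1_mult v v = k *s v" unfolding Sv span1 by blast
  from classify[OF v0 this] show ?thesis unfolding Sv .
qed

lemma id_aut: "A1_automorphism id"
  unfolding A1_automorphism_def by (simp add: vec.linear_id)

theorem mainTheorem4:
  shows "(\<forall>S. (A1_subalgebra S \<and> vec.dim S = 1) \<longleftrightarrow>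
            (S = vec.span {e1} \<or> S = vec.span {e2} \<or>
             (\<exists>\<alpha>::complex. S = vec.span {\<alpha> *s e2 + e3})))
       \<and> (\<forall>S. A1_subalgebra S \<and> vec.dim S = 1 \<longrightarrow>
            A1_equiv S (vec.span {e1}) \<or> A1_equiv S (vec.span {e2}))"
proof (rule conjI; intro allI iffI impI)
  fix S assume "A1_subalgebra S \<and> vec.dim S = 1"
  then show "S = vec.span {e1} \<or> S = vec.span {e2} \<or>
             (\<exists>\<alpha>::complex. S = vec.span {\<alpha> *s e2 + e3})" using fwd by blast
next
  fix S assume "S = vec.span {e1} \<or> S = vec.span {e2} \<or>
             (\<exists>\<alpha>::complex. S = vec.span {\<alpha> *s e2 + e3})"
  moreover have "e1 \<noteq> 0" "e2 \<noteq> 0" "\<And>a. a *s e2 + e3 \<noteq> 0"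
    by (auto simp: vec_eq_iff forall_3 e_c)
  moreover have "A1_mult e1 e1 = e1" "A1_mult e2 e2 = 0" "\<And>a. A1_mult (a *s e2 + e3) (a *s e2 + e3) = 0"
    by (auto simp: vec_eq_iff forall_3 e_c mult_c)
  ultimately show "A1_subalgebra S \<and> vec.dim S = 1"
    using sub_span dim1 by metis
next
  fix S assume "A1_subalgebra S \<and> vec.dim S = 1"
  then have "S = vec.span {e1} \<or> S = vec.span {e2} \<or>
             (\<exists>\<alpha>::complex. S = vec.span {\<alpha> *s e2 + e3})" using fwd by blast
  then show "A1_equiv S (vec.span {e1}) \<or> A1_equiv S (vec.span {e2})"
  proof (elim disjE exE)
    assume "S = vec.span {e1}" then show ?thesis using id_aut unfolding A1_equiv_def by (auto intro!: exI[of _ id])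
  next
    assume "S = vec.span {e2}" then show ?thesis using id_aut unfolding A1_equiv_def by (auto intro!: exI[of _ id])
  next
    fix a assume "S = vec.span {a *s e2 + e3}" then show ?thesis using phi_aut phi_img unfolding A1_equiv_def by metis
  qed
qed

end
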